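(* Let $(V_i,W_{i\oplus_5 1})$, $i\in\{1,\ldots,5\}$, be a consistently connected KCBS-system satisfying the KCBS exclusion, and let $p_i=\Pr[V_i=1]=\Pr[W_i=1]$. Then $$\mathsf{s}_{odd}\big(\langle V_iW_{i\oplus_5 1}\rangle:i\in\{1,\ldots,5\}\big)\le 3$$ holds if and only if $\sum_{i=1}^5 p_i\le 2$.
   Context: $\oplus_5$ denotes cyclic addition on $\{1,\ldots,5\}$ ($5\oplus_5 1=1$). A KCBS-system consists of five jointly distributed pairs $(V_i,W_{i\oplus_5 1})$, $i=1,\ldots,5$, of $\pm1$-valued random variables, variables in different pairs being stochastically unrelated. It is consistently connected if $V_i$ and $W_i$ have the same distribution for each $i$. It satisfies the KCBS exclusion if $\Pr[V_i=1,W_{i\oplus_5 1}=1]=0$ for each $i$. $\langle\cdot\rangle$ denotes expectation. For reals $a_1,\ldots,a_m$, $\mathsf{s}_{odd}(a_1,\ldots,a_m)$ is the maximum of $\sum_{i=1}^m(\pm a_i)$ over all sign choices with an odd number of minus signs. *)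

theory Defs
  imports "HOL-Probability.Probability"
begin

definition succ5 :: "nat \<Rightarrow> nat" where
  "succ5 i = (if i = 5 then 1 else i + 1)"

definition pred5 :: "nat \<Rightarrow> nat" where
  "pred5 i = (if i = 1 then 5 else i - 1)"

definition s_odd :: "real list \<Rightarrow> real" where
  "s_odd as = Max {sum_list (map2 (*) ss as) | ss.
      length ss = length as \<and> set ss \<subseteq> {-1, 1} \<and> odd (length (filter (\<lambda>s. s = -1) ss))}"

text \<open>A KCBS-system: for each i in {1..5}, P i is the joint distribution of the pair
  (V_i, W_{i \<oplus>_5 1}) of +/-1 valued random variables (first component V_i,
  second component W_{i \<oplus>_5 1}). Different pairs are stochastically unrelated,
  so only the five joint distributions matter.\<close>
definition kcbs_system :: "(nat \<Rightarrow> (real \<times> real) pmf) \<Rightarrow> bool" where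
  "kcbs_system P \<longleftrightarrow> (\<forall>i\<in>{1..5}. set_pmf (P i) \<subseteq> {-1, 1} \<times> {-1, 1})"

text \<open>Distribution of V_i is the first marginal of P i; distribution of W_i is the second
  marginal of P (pred5 i).\<close>
definition consistently_connected :: "(nat \<Rightarrow> (real \<times> real) pmf) \<Rightarrow> bool" where
  "consistently_connected P \<longleftrightarrow> (\<forall>i\<in>{1..5}. map_pmf fst (P i) = map_pmf snd (P (pred5 i)))"

definition kcbs_exclusion :: "(nat \<Rightarrow> (real \<times> real) pmf) \<Rightarrow> bool" where
  "kcbs_exclusion P \<longleftrightarrow> (\<forall>i\<in>{1..5}. measure_pmf.prob (P i) {(1, 1)} = 0)"

definition pV :: "(nat \<Rightarrow> (real \<times> real) pmf) \<Rightarrow> nat \<Rightarrow> real" where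
  "pV P i = measure_pmf.prob (P i) {x. fst x = 1}"

definition corr :: "(nat \<Rightarrow> (real \<times> real) pmf) \<Rightarrow> nat \<Rightarrow> real" where
  "corr P i = measure_pmf.expectation (P i) (\<lambda>x. fst x * snd x)"

end

theory Submission
  imports Defs
begin
lemma pair_facts:
  fixes M :: "(real\<times>real) pmf"
  assumes S: "set_pmf M \<subseteq> {-1,1}\<times>{-1,1}" and E: "measure_pmf.prob M {(1,1)} = 0"
  shows "measure_pmf.expectation M (\<lambda>x. fst x * snd x) =
           1 - 2*measure_pmf.prob M {x. fst x = 1} - 2*measure_pmf.prob M {x. snd x = 1}"
    "measure_pmf.prob M {x. fst x = 1} + measure_pmf.prob M {x. snd x = 1} \<le> 1"
    "measure_pmf.prob M {x. fst x = 1} \<ge> 0"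
proof -
  let ?A = "{(1,1),(1,-1),(-1,1),(-1,-1)} :: (real\<times>real) set"
  have fin: "finite ?A" by simp
  have sub: "\<And>a. a \<in> set_pmf M \<Longrightarrow> a \<in> ?A" using S by auto
  have I: "\<And>f. measure_pmf.expectation M f = (\<Sum>a\<in>?A. f a * pmf M a)"
    by (rule integral_measure_pmf_real[OF fin]) (use sub in auto)
  have P: "\<And>B. measure_pmf.prob M B = (\<Sum>a\<in>?A. indicator B a * pmf M a)"
    using I[of "indicator _"] by simp
  have one: "(\<Sum>a\<in>?A. pmf M a) = 1" using I[of "\<lambda>_. 1"] by simp
  have e: "pmf M (1,1) = 0" using P[of "{(1,1)}"] E by (simp add: indicator_def)
  have nn: "pmf M (-1,-1) \<ge> 0" by simp
  show "measure_pmf.expectation M (\<lambda>x. fst x * snd x) =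
           1 - 2*measure_pmf.prob M {x. fst x = 1} - 2*measure_pmf.prob M {x. snd x = 1}"
    using one e unfolding I P by (simp add: indicator_def)
  show "measure_pmf.prob M {x. fst x = 1} + measure_pmf.prob M {x. snd x = 1} \<le> 1"
    using one e nn unfolding P by (simp add: indicator_def, smt (verit) pmf_nonneg)
  show "measure_pmf.prob M {x. fst x = 1} \<ge> 0" by simp
qed

lemma kcbs_facts:
  assumes "kcbs_system P" "consistently_connected P" "kcbs_exclusion P" "i \<in> {1..5}"
  shows "corr P i = 1 - 2*(pV P i + pV P (succ5 i))"
        "pV P i + pV P (succ5 i) \<le> 1" "pV P i \<ge> 0"
proof -
  have s: "succ5 i \<in> {1..5}" "pred5 (succ5 i) = i" using assms(4) by (auto simp: succ5_def pred5_def)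
  have m: "map_pmf fst (P (succ5 i)) = map_pmf snd (P i)"
    using assms(2) s unfolding consistently_connected_def by metis
  have "pV P (succ5 i) = measure_pmf.prob (map_pmf fst (P (succ5 i))) {1}"
    unfolding pV_def by (simp add: vimage_def)
  also have "\<dots> = measure_pmf.prob (P i) {x. snd x = 1}" unfolding m by (simp add: vimage_def)
  finally have q: "pV P (succ5 i) = measure_pmf.prob (P i) {x. snd x = 1}" .
  have S: "set_pmf (P i) \<subseteq> {-1,1}\<times>{-1,1}" using assms(1,4) unfolding kcbs_system_def by blast
  have E: "measure_pmf.prob (P i) {(1,1)} = 0" using assms(3,4) unfolding kcbs_exclusion_def by blast
  note f = pair_facts[OF S E]
  show "corr P i = 1 - 2*(pV P i + pV P (succ5 i))" using f(1) q unfolding corr_def pV_def by simp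
  show "pV P i + pV P (succ5 i) \<le> 1" using f(2) q unfolding pV_def by simp
  show "pV P i \<ge> 0" unfolding pV_def by simp
qed

lemma list5: assumes "length (ss::real list) = 5" obtains a b c d e where "ss = [a,b,c,d,e]"
  using assms by (auto simp: numeral_eq_Suc length_Suc_conv)

theorem theorem34:
  fixes P :: "nat \<Rightarrow> (real \<times> real) pmf"
  assumes "kcbs_system P"
    and "consistently_connected P"
    and "kcbs_exclusion P"
  shows "s_odd (map (corr P) [1..<6]) \<le> 3 \<longleftrightarrow> (\<Sum>i=1..5. pV P i) \<le> 2"
proof -
  note K = kcbs_facts[OF assms]
  have sc: "succ5 1 = 2" "succ5 2 = 3" "succ5 3 = 4" "succ5 4 = 5" "succ5 5 = 1" by (simp_all add: succ5_def)
  have c1: "corr P 1 = 1 - 2*(pV P 1 + pV P 2)" using K(1)[of 1] sc by simp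
  have c2: "corr P 2 = 1 - 2*(pV P 2 + pV P 3)" using K(1)[of 2] sc by simp
  have c3: "corr P 3 = 1 - 2*(pV P 3 + pV P 4)" using K(1)[of 3] sc by simp
  have c4: "corr P 4 = 1 - 2*(pV P 4 + pV P 5)" using K(1)[of 4] sc by simp
  have c5: "corr P 5 = 1 - 2*(pV P 5 + pV P 1)" using K(1)[of 5] sc by simp
  have b1: "pV P 1 + pV P 2 \<le> 1" using K(2)[of 1] sc by simp
  have b2: "pV P 2 + pV P 3 \<le> 1" using K(2)[of 2] sc by simp
  have b3: "pV P 3 + pV P 4 \<le> 1" using K(2)[of 3] sc by simp
  have b4: "pV P 4 + pV P 5 \<le> 1" using K(2)[of 4] sc by simp
  have b5: "pV P 5 + pV P 1 \<le> 1" using K(2)[of 5] sc by simp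
  have n: "pV P 1 \<ge> 0" "pV P 2 \<ge> 0" "pV P 3 \<ge> 0" "pV P 4 \<ge> 0" "pV P 5 \<ge> 0" using K(3) by auto
  have sumeq: "(\<Sum>i=1..5. pV P i) = pV P 1 + pV P 2 + pV P 3 + pV P 4 + pV P 5"
    by (simp add: numeral_eq_Suc)
  have mp: "map (corr P) [1..<6] = [corr P 1, corr P 2, corr P 3, corr P 4, corr P 5]"
    by (simp add: upt_rec numeral_eq_Suc)
  define S where "S = {sum_list (map2 (*) ss (map (corr P) [1..<6])) | ss.
      length ss = length (map (corr P) [1..<6]) \<and> set ss \<subseteq> {-1, 1} \<and> odd (length (filter (\<lambda>s. s = -1) ss))}"
  have so: "s_odd (map (corr P) [1..<6]) = Max S" unfolding s_odd_def S_def ..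
  have fin: "finite S"
  proof -
    have "S \<subseteq> (\<lambda>ss. sum_list (map2 (*) ss (map (corr P) [1..<6]))) ` {ss. set ss \<subseteq> {-1,1} \<and> length ss = 5}"
      unfolding S_def by auto
    moreover have "finite {ss. set ss \<subseteq> {-1,1::real} \<and> length ss = 5}"
      by (rule finite_lists_length_eq) simp
    ultimately show ?thesis by (meson finite_surj)
  qed
  have mem: "sum_list (map2 (*) (replicate 5 (-1)) (map (corr P) [1..<6])) \<in> S"
    unfolding S_def by (intro CollectI exI[of _ "replicate 5 (-1)"]) (simp add: numeral_eq_Suc, presburger)
  have ne: "S \<noteq> {}" using mem by auto
  have all: "(\<forall>x\<in>S. x \<le> 3) \<longleftrightarrow> (\<Sum>i=1..5. pV P i) \<le> 2"
  proof
    assume "\<forall>x\<in>S. x \<le> 3"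
    then have "sum_list (map2 (*) (replicate 5 (-1)) (map (corr P) [1..<6])) \<le> 3" using mem by blast
    then show "(\<Sum>i=1..5. pV P i) \<le> 2" unfolding mp sumeq c1 c2 c3 c4 c5
      by (simp add: numeral_eq_Suc)
  next
    assume h: "(\<Sum>i=1..5. pV P i) \<le> 2"
    show "\<forall>x\<in>S. x \<le> 3"
    proof
      fix x assume "x \<in> S"
      then obtain ss where x: "x = sum_list (map2 (*) ss (map (corr P) [1..<6]))"
        and l: "length ss = 5" and st: "set ss \<subseteq> {-1,1}" and od: "odd (length (filter (\<lambda>s. s = -1) ss))"
        unfolding S_def by auto
      obtain a b c d e where ss: "ss = [a,b,c,d,e]" using list5[OF l] by blast
      have ab: "a = -1 \<or> a = 1" "b = -1 \<or> b = 1" "c = -1 \<or> c = 1" "d = -1 \<or> d = 1" "e = -1 \<or> e = 1"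
        using st ss by auto
      have h': "pV P 1 + pV P 2 + pV P 3 + pV P 4 + pV P 5 \<le> 2" using h sumeq by simp
      have xv: "x = a*(1 - 2*(pV P 1 + pV P 2)) + b*(1 - 2*(pV P 2 + pV P 3)) + c*(1 - 2*(pV P 3 + pV P 4))
          + d*(1 - 2*(pV P 4 + pV P 5)) + e*(1 - 2*(pV P 5 + pV P 1))"
        unfolding x ss mp c1 c2 c3 c4 c5 by simp
      have od': "odd (length (filter (\<lambda>s. s = -1) [a,b,c,d,e]))" using od ss by simp
      show "x \<le> 3" using ab od' unfolding xv
        by (elim disjE; simp only: mult_1 mult_minus1 filter.simps if_True if_False list.size; 
            (insert h' b1 b2 b3 b4 b5 n; simp; linarith)?)
    qed
  qed
  show ?thesis unfolding so using Max_le_iff[OF fin ne] all by simp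
qed
end
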